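(* Let $\mu$ be a monotone system over $\{0,1\}^V$ and $\theta\in(0,1)$, $T_1,T_2\ge1$. Let $(X^{(t)}_{\mu\text{-GD}})_{t\ge0}$ be the Glauber dynamics for $\mu$ started from $X^{(0)}_{\mu\text{-GD}}=\mathbf 1_V$, and let $(X^{(t)}_{\mathrm{alg}})_{t=0}^{T_1T_2}$ be the Markov chain generated by $\mathcal A_\mu(\theta,T_1,T_2)$. Then for every integer $0\le t\le T_1T_2$, \[ d_{\mathrm{TV}}(X^{(t)}_{\mu\text{-GD}},\mu)\le d_{\mathrm{TV}}(\mathsf{contr}(X^{(t)}_{\mathrm{alg}}),\mu), \] where $d_{\mathrm{TV}}$ between a random variable and a distribution means between its law and the distribution.
   Context: Partial order on $\{0,1\}^S$: coordinatewise. Monotone system: for every $v\in V$ and all feasible (positive-probability) $\sigma\preceq\tau$ in $\{0,1\}^{V\setminus\{v\}}$, $\mu^\sigma_v(1)\le\mu^\tau_v(1)$, where $\mu^\sigma_v$ is the conditional marginal at $v$. Glauber dynamics for $\mu$: pick $v$ uniformly, resample $X_v\sim\mu_v^{X_{V\setminus\{v\}}}$. Tilted distribution $(\theta*\mu)(\sigma)\propto\mu(\sigma)\theta^{\|\sigma\|_1}$. $\mathsf{lift}:\{0,1\}^V\to\{0,1,\star\}^V$ is random: independently per coordinate, $0\mapsto0$, $1\mapsto\star$ w.p. $1-\theta$ and $1\mapsto1$ w.p. $\theta$. $\mathsf{contr}$ maps $0\mapsto0$ and $1,\star\mapsto1$ coordinatewise. Algorithm $\mathcal A_\mu(\theta,T_1,T_2)$: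 set $X=\mathsf{lift}(\mathbf 1_V)$; repeat $T_1$ times: (a) $X\gets\mathsf{contr}(X)$; (b) $X\gets\mathsf{lift}(X)$, $S=\{v:X_v\ne\star\}$; (c) repeat $T_2$ times: pick $v\in V$ uniformly; if $v\in S$ resample $X_v\sim(\theta*\mu)_v^{\sigma_{V\setminus\{v\}}}$ with $\sigma=\mathsf{contr}(X)$, otherwise keep $X_v=\star$. $X^{(0)}_{\mathrm{alg}}=\mathsf{lift}(\mathbf 1_V)$ and $X^{(t)}_{\mathrm{alg}}$ is the state after the $t$-th single-site step in (c). *)

theory Defs
  imports "HOL-Probability.Probability"
begin

text \<open>Vertex set V = UNIV of a finite type 'v; a configuration in {0,1}^V is a
  function 'v => bool (True = 1). Distributions are pmfs.\<close>

datatype tri = Zero | One | Star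

text \<open>Conditional marginal mu^sigma_v(1); the value of sigma at v is ignored.\<close>
definition cond1 :: "('v \<Rightarrow> bool) pmf \<Rightarrow> 'v \<Rightarrow> ('v \<Rightarrow> bool) \<Rightarrow> real" where
  "cond1 \<mu> v \<sigma> = pmf \<mu> (\<sigma>(v := True)) / (pmf \<mu> (\<sigma>(v := True)) + pmf \<mu> (\<sigma>(v := False)))"

text \<open>sigma restricted to V - {v} has positive probability.\<close>
definition feasible_at :: "('v \<Rightarrow> bool) pmf \<Rightarrow> 'v \<Rightarrow> ('v \<Rightarrow> bool) \<Rightarrow> bool" where
  "feasible_at \<mu> v \<sigma> \<longleftrightarrow> pmf \<mu> (\<sigma>(v := True)) + pmf \<mu> (\<sigma>(v := False)) > 0"

definition monotone_system :: "('v \<Rightarrow> bool) pmf \<Rightarrow> bool" where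
  "monotone_system \<mu> \<longleftrightarrow>
     (\<forall>v \<sigma> \<tau>. (\<forall>u. u \<noteq> v \<longrightarrow> \<sigma> u \<longrightarrow> \<tau> u) \<and> feasible_at \<mu> v \<sigma> \<and> feasible_at \<mu> v \<tau>
        \<longrightarrow> cond1 \<mu> v \<sigma> \<le> cond1 \<mu> v \<tau>)"

definition tilt :: "real \<Rightarrow> ('v::finite \<Rightarrow> bool) pmf \<Rightarrow> ('v \<Rightarrow> bool) pmf" where
  "tilt \<theta> \<mu> = embed_pmf (\<lambda>\<sigma>. pmf \<mu> \<sigma> * \<theta> ^ card {v. \<sigma> v} /
       (\<Sum>\<rho>\<in>UNIV. pmf \<mu> \<rho> * \<theta> ^ card {v. \<rho> v}))"

definition glauber_step :: "('v::finite \<Rightarrow> bool) pmf \<Rightarrow> ('v \<Rightarrow> bool) \<Rightarrow> ('v \<Rightarrow> bool) pmf" where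
  "glauber_step \<mu> x = do { v \<leftarrow> pmf_of_set UNIV; b \<leftarrow> bernoulli_pmf (cond1 \<mu> v x); return_pmf (x(v := b)) }"

fun glauber :: "('v::finite \<Rightarrow> bool) pmf \<Rightarrow> nat \<Rightarrow> ('v \<Rightarrow> bool) pmf" where
  "glauber \<mu> 0 = return_pmf (\<lambda>_. True)"
| "glauber \<mu> (Suc t) = glauber \<mu> t \<bind> glauber_step \<mu>"

definition lift :: "real \<Rightarrow> ('v::finite \<Rightarrow> bool) \<Rightarrow> ('v \<Rightarrow> tri) pmf" where
  "lift \<theta> x = Pi_pmf UNIV Zero
     (\<lambda>v. if x v then map_pmf (\<lambda>b. if b then One else Star) (bernoulli_pmf \<theta>) else return_pmf Zero)"

definition contr :: "('v \<Rightarrow> tri) \<Rightarrow> ('v \<Rightarrow> bool)" where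
  "contr X = (\<lambda>v. X v \<noteq> Zero)"

text \<open>One single-site step of phase (c): S = non-star sites.\<close>
definition alg_step :: "real \<Rightarrow> ('v::finite \<Rightarrow> bool) pmf \<Rightarrow> ('v \<Rightarrow> tri) \<Rightarrow> ('v \<Rightarrow> tri) pmf" where
  "alg_step \<theta> \<mu> X = do {
     v \<leftarrow> pmf_of_set UNIV;
     if X v = Star then return_pmf X
     else do { b \<leftarrow> bernoulli_pmf (cond1 (tilt \<theta> \<mu>) v (contr X));
               return_pmf (X(v := (if b then One else Zero))) } }"

text \<open>Law of X^(t)_alg: X^(0) = lift(1); step t+1 is step (t mod T2)+1 of round
  (t div T2)+1, which is preceded by contr and lift when t mod T2 = 0.\<close>
fun alg :: "real \<Rightarrow> ('v::finite \<Rightarrow> bool) pmf \<Rightarrow> nat \<Rightarrow> nat \<Rightarrow> ('v \<Rightarrow> tri) pmf" where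
  "alg \<theta> \<mu> T2 0 = lift \<theta> (\<lambda>_. True)"
| "alg \<theta> \<mu> T2 (Suc t) =
     (if t mod T2 = 0 then alg \<theta> \<mu> T2 t \<bind> (\<lambda>X. lift \<theta> (contr X)) else alg \<theta> \<mu> T2 t)
       \<bind> alg_step \<theta> \<mu>"

definition tv_dist :: "'a pmf \<Rightarrow> 'a pmf \<Rightarrow> real" where
  "tv_dist p q = (SUP A. \<bar>measure_pmf.prob p A - measure_pmf.prob q A\<bar>)"

end

theory Submission
  imports Defs
begin


lemma UNIV_tri: "(UNIV :: tri set) = {Zero, One, Star}"
  by (auto intro: tri.exhaust)

instance tri :: finite
  by standard (simp add: UNIV_tri)

definition E :: "'a::finite pmf \<Rightarrow> ('a \<Rightarrow> real) \<Rightarrow> real" where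
  "E p f = (\<Sum>x\<in>UNIV. pmf p x * f x)"

lemma pmf_bind_fin: "pmf (bind_pmf p K) y = (\<Sum>x\<in>UNIV. pmf p x * pmf (K x) y)"
  for p :: "'a::finite pmf"
  by (simp add: pmf_bind integral_measure_pmf_real[of UNIV] mult.commute)

lemma E_bind: "E (bind_pmf p K) f = E p (\<lambda>x. E (K x) f)"
  for p :: "'a::finite pmf" and K :: "'a \<Rightarrow> 'b::finite pmf"
proof -
  have "E (bind_pmf p K) f = (\<Sum>y\<in>UNIV. \<Sum>x\<in>UNIV. pmf p x * pmf (K x) y * f y)"
    by (simp add: E_def pmf_bind_fin sum_distrib_right)
  also have "\<dots> = (\<Sum>x\<in>UNIV. \<Sum>y\<in>UNIV. pmf p x * pmf (K x) y * f y)"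
    by (rule sum.swap)
  also have "\<dots> = E p (\<lambda>x. E (K x) f)"
    by (simp add: E_def sum_distrib_left mult.assoc)
  finally show ?thesis .
qed

lemma E_return[simp]: "E (return_pmf x) f = f x"
proof -
  have "E (return_pmf x) f = (\<Sum>y\<in>UNIV. (if y = x then f x else 0))"
    unfolding E_def by (intro sum.cong) (auto simp: pmf_return)
  then show ?thesis by simp
qed

lemma E_map: "E (map_pmf g p) f = E p (\<lambda>x. f (g x))"
  for p :: "'a::finite pmf" and g :: "'a \<Rightarrow> 'b::finite"
  by (simp add: map_pmf_def E_bind)

lemma E_bern: "0 \<le> p \<Longrightarrow> p \<le> 1 \<Longrightarrow> E (bernoulli_pmf p) f = p * f True + (1 - p) * f False"
  by (simp add: E_def UNIV_bool)

lemma E_unif: "E (pmf_of_set (UNIV::'a::finite set)) f = (\<Sum>x\<in>UNIV. f x) / card (UNIV::'a set)"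
  by (simp add: E_def sum_divide_distrib)

lemma E_mono: "(\<And>x. pmf p x > 0 \<Longrightarrow> f x \<le> g x) \<Longrightarrow> E p f \<le> E p g"
  unfolding E_def
  by (intro sum_mono) (metis less_eq_real_def mult_eq_0_iff mult_left_mono pmf_nonneg)

lemma E_cong: "(\<And>x. pmf p x > 0 \<Longrightarrow> f x = g x) \<Longrightarrow> E p f = E p g"
  by (simp add: E_mono order_antisym)

lemma E_const[simp]: "E p (\<lambda>_. c) = c"
  by (simp add: E_def sum_pmf_eq_1 flip: sum_distrib_right)

lemma E_add: "E p (\<lambda>x. f x + g x) = E p f + E p g"
  by (simp add: E_def distrib_left sum.distrib)

lemma E_cmult: "E p (\<lambda>x. c * f x) = c * E p f"
  by (simp add: E_def sum_distrib_left mult.left_commute)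

lemma E_sum: "E p (\<lambda>x. \<Sum>i\<in>I. f i x) = (\<Sum>i\<in>I. E p (f i))"
  by (simp add: E_def sum_distrib_left sum.swap[of _ I])

lemma E_div: "E p (\<lambda>x. f x / c) = E p f / c"
  by (simp add: E_def sum_divide_distrib)

lemma prob_E: "measure_pmf.prob p A = E p (indicator A)"
  for p :: "'a::finite pmf"
  by (simp add: E_def measure_measure_pmf_finite indicator_def sum.If_cases)

lemma cond1_nonneg: "0 \<le> cond1 \<mu> v \<sigma>"
  by (simp add: cond1_def)

lemma cond1_le1: "cond1 \<mu> v \<sigma> \<le> 1"
  unfolding cond1_def by (smt (verit) divide_le_eq_1 pmf_nonneg)

lemma E_gstep: "E (glauber_step \<mu> x) f =
   (\<Sum>v\<in>UNIV. cond1 \<mu> v x * f (x(v := True)) + (1 - cond1 \<mu> v x) * f (x(v := False)))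
     / card (UNIV :: 'v::finite set)"
  for x :: "'v::finite \<Rightarrow> bool"
  by (simp add: glauber_step_def E_bind E_unif E_bern cond1_nonneg cond1_le1)

definition Kv :: "real \<Rightarrow> ('v::finite \<Rightarrow> bool) pmf \<Rightarrow> 'v \<Rightarrow> (('v \<Rightarrow> tri) \<Rightarrow> real) \<Rightarrow> ('v \<Rightarrow> tri) \<Rightarrow> real" where
  "Kv \<theta> \<mu> v F X = (if X v = Star then F X else
      cond1 (tilt \<theta> \<mu>) v (contr X) * F (X(v := One)) + (1 - cond1 (tilt \<theta> \<mu>) v (contr X)) * F (X(v := Zero)))"

lemma E_astep: "E (alg_step \<theta> \<mu> X) F = (\<Sum>v\<in>UNIV. Kv \<theta> \<mu> v F X) / card (UNIV :: 'v::finite set)"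
  for X :: "'v::finite \<Rightarrow> tri"
proof -
  have "E (alg_step \<theta> \<mu> X) F = E (pmf_of_set UNIV) (\<lambda>v. Kv \<theta> \<mu> v F X)"
    unfolding alg_step_def E_bind
    by (intro E_cong) (auto simp: Kv_def E_bind E_bern cond1_nonneg cond1_le1)
  then show ?thesis by (simp add: E_unif)
qed

definition beta :: "real \<Rightarrow> ('v::finite \<Rightarrow> bool) pmf" where
  "beta \<theta> = Pi_pmf UNIV False (\<lambda>_. bernoulli_pmf \<theta>)"

definition phi :: "('v \<Rightarrow> bool) \<Rightarrow> ('v \<Rightarrow> bool) \<Rightarrow> ('v \<Rightarrow> tri)" where
  "phi x B = (\<lambda>v. if x v then (if B v then One else Star) else Zero)"

lemma lift_beta: "lift \<theta> x = map_pmf (phi x) (beta \<theta>)"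
proof -
  have "lift \<theta> x = Pi_pmf UNIV Zero (\<lambda>v. bind_pmf (bernoulli_pmf \<theta>)
           (\<lambda>c. return_pmf (if x v then (if c then One else Star) else Zero)))"
    unfolding lift_def
    by (intro Pi_pmf_cong) (auto simp: map_pmf_def bind_pmf_const)
  also have "\<dots> = do {f \<leftarrow> beta \<theta>; Pi_pmf UNIV Zero (\<lambda>v. return_pmf (if x v then (if f v then One else Star) else Zero))}"
    unfolding beta_def by (rule Pi_pmf_bind) simp
  also have "\<dots> = map_pmf (phi x) (beta \<theta>)"
    by (simp add: map_pmf_def phi_def)
  finally show ?thesis .
qed

lemma E_lift: "E (lift \<theta> x) F = E (beta \<theta>) (\<lambda>B. F (phi x B))"
  by (simp add: lift_beta E_map)

lemma E_beta_resample:
  fixes v :: "'v::finite"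
  assumes "0 \<le> \<theta>" "\<theta> \<le> 1"
  shows "E (beta \<theta>) G = \<theta> * E (beta \<theta>) (\<lambda>B. G (B(v := True))) + (1 - \<theta>) * E (beta \<theta>) (\<lambda>B. G (B(v := False)))"
proof -
  define b' where "b' = Pi_pmf (UNIV - {v}) False (\<lambda>_::'v. bernoulli_pmf \<theta>)"
  have eq: "beta \<theta> = do {y \<leftarrow> bernoulli_pmf \<theta>; f \<leftarrow> b'; return_pmf (f(v := y))}"
  proof -
    have "(UNIV::'v set) = insert v (UNIV - {v})" by auto
    then have "beta \<theta> = Pi_pmf (insert v (UNIV - {v})) False (\<lambda>_::'v. bernoulli_pmf \<theta>)"
      unfolding beta_def by simp
    also have "\<dots> = do {y \<leftarrow> bernoulli_pmf \<theta>; f \<leftarrow> b'; return_pmf (f(v := y))}"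
      unfolding b'_def by (rule Pi_pmf_insert') auto
    finally show ?thesis .
  qed
  have 1: "E (beta \<theta>) (\<lambda>B. G (B(v := b))) = E b' (\<lambda>f. G (f(v := b)))" for b
    by (simp add: eq E_bind E_bern assms flip: distrib_right)
  show ?thesis
    by (simp add: 1 eq E_bind E_bern assms)
qed

definition Zt :: "real \<Rightarrow> ('v::finite \<Rightarrow> bool) pmf \<Rightarrow> real" where
  "Zt \<theta> \<mu> = (\<Sum>\<rho>\<in>UNIV. pmf \<mu> \<rho> * \<theta> ^ card {v. \<rho> v})"

lemma Zt_pos: "0 < \<theta> \<Longrightarrow> 0 < Zt \<theta> \<mu>"
proof -
  assume th: "0 < \<theta>"
  obtain \<rho> where "\<rho> \<in> set_pmf \<mu>" using set_pmf_not_empty[of \<mu>] by blast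
  then have "0 < pmf \<mu> \<rho> * \<theta> ^ card {v. \<rho> v}" using th by (simp add: pmf_positive)
  then show ?thesis unfolding Zt_def
    by (intro sum_pos2[of UNIV \<rho>]) (auto simp: th less_imp_le)
qed

lemma pmf_tilt: "0 < \<theta> \<Longrightarrow> pmf (tilt \<theta> \<mu>) \<sigma> = pmf \<mu> \<sigma> * \<theta> ^ card {v. \<sigma> v} / Zt \<theta> \<mu>"
proof -
  assume th: "0 < \<theta>"
  have Z: "0 < Zt \<theta> \<mu>" using Zt_pos th .
  show ?thesis unfolding tilt_def Zt_def[symmetric]
  proof (rule pmf_embed_pmf)
    show "\<And>x. 0 \<le> pmf \<mu> x * \<theta> ^ card {v. x v} / Zt \<theta> \<mu>" using th Z by simp
    have "(\<Sum>x\<in>UNIV. pmf \<mu> x * \<theta> ^ card {v. x v} / Zt \<theta> \<mu>) = 1"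
      using Z by (simp add: Zt_def flip: sum_divide_distrib)
    moreover have "(\<Sum>a\<in>UNIV. ennreal (pmf \<mu> a * \<theta> ^ card {v. a v} / Zt \<theta> \<mu>))
        = ennreal (\<Sum>a\<in>UNIV. pmf \<mu> a * \<theta> ^ card {v. a v} / Zt \<theta> \<mu>)"
      by (rule sum_ennreal) (use th Z in simp)
    ultimately show "(\<integral>\<^sup>+ x. ennreal (pmf \<mu> x * \<theta> ^ card {v. x v} / Zt \<theta> \<mu>) \<partial>count_space UNIV) = 1"
      by (simp add: nn_integral_count_space_finite)
  qed
qed

lemma card_upd_True: "card {u. (x(v := True)) u} = Suc (card {u. (x(v := False)) u})"
  for x :: "'v::finite \<Rightarrow> bool"
proof -
  have "{u. (x(v := True)) u} = insert v {u. (x(v := False)) u}" by auto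
  moreover have "v \<notin> {u. (x(v := False)) u}" by simp
  ultimately show ?thesis by simp
qed

lemma cond1_tilt: "0 < \<theta> \<Longrightarrow> cond1 (tilt \<theta> \<mu>) v x =
   \<theta> * pmf \<mu> (x(v:=True)) / (\<theta> * pmf \<mu> (x(v:=True)) + pmf \<mu> (x(v:=False)))"
proof -
  assume th: "0 < \<theta>"
  define k where "k = card {u. (x(v := False)) u}"
  define Z where "Z = Zt \<theta> \<mu>"
  have Z: "0 < Z" using Zt_pos th Z_def by blast
  have "cond1 (tilt \<theta> \<mu>) v x = (pmf \<mu> (x(v:=True)) * \<theta> ^ Suc k / Z) /
     (pmf \<mu> (x(v:=True)) * \<theta> ^ Suc k / Z + pmf \<mu> (x(v:=False)) * \<theta> ^ k / Z)"
    unfolding cond1_def pmf_tilt[OF th] card_upd_True k_def[symmetric] Z_def[symmetric] by (rule refl)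
  also have "\<dots> = (\<theta> ^ k / Z) * (\<theta> * pmf \<mu> (x(v:=True))) / ((\<theta> ^ k / Z) * (\<theta> * pmf \<mu> (x(v:=True)) + pmf \<mu> (x(v:=False))))"
    by (simp add: algebra_simps)
  also have "\<dots> = \<theta> * pmf \<mu> (x(v:=True)) / (\<theta> * pmf \<mu> (x(v:=True)) + pmf \<mu> (x(v:=False)))"
    using th Z by (subst mult_divide_mult_cancel_left) auto
  finally show ?thesis .
qed

lemma cond1_upd[simp]: "cond1 \<mu> v (x(v := b)) = cond1 \<mu> v x"
  by (simp add: cond1_def)

lemma feasible_upd[simp]: "feasible_at \<mu> v (x(v := b)) = feasible_at \<mu> v x"
  by (simp add: feasible_at_def)

lemma pos_comb:
  fixes p q \<theta> :: real
  assumes "0 < q + p" "0 \<le> p" "0 \<le> q" "0 < \<theta>"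
  shows "0 < \<theta> * q + p"
proof (cases "0 < q")
  case True
  then have "0 < \<theta> * q" using assms by simp
  then show ?thesis using assms by linarith
next
  case False
  then show ?thesis using assms by simp
qed

definition Dx :: "('v \<Rightarrow> bool) pmf \<Rightarrow> ('v \<Rightarrow> bool) \<Rightarrow> bool" where
  "Dx \<mu> z \<longleftrightarrow> 0 < pmf \<mu> z \<or> z = (\<lambda>_. True)"

definition leB :: "('v \<Rightarrow> bool) \<Rightarrow> ('v \<Rightarrow> bool) \<Rightarrow> bool" where
  "leB x y \<longleftrightarrow> (\<forall>v. x v \<longrightarrow> y v)"

fun rk :: "tri \<Rightarrow> nat" where
  "rk Zero = 0" | "rk One = 1" | "rk Star = 2"

definition leT :: "('v \<Rightarrow> tri) \<Rightarrow> ('v \<Rightarrow> tri) \<Rightarrow> bool" where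
  "leT X Y \<longleftrightarrow> (\<forall>v. rk (X v) \<le> rk (Y v))"

definition incrT :: "('v \<Rightarrow> bool) pmf \<Rightarrow> (('v \<Rightarrow> tri) \<Rightarrow> real) \<Rightarrow> bool" where
  "incrT \<mu> F \<longleftrightarrow> (\<forall>X Y. leT X Y \<longrightarrow> Dx \<mu> (contr X) \<longrightarrow> Dx \<mu> (contr Y) \<longrightarrow> F X \<le> F Y)"

lemma incrTD: "incrT \<mu> F \<Longrightarrow> leT X Y \<Longrightarrow> Dx \<mu> (contr X) \<Longrightarrow> Dx \<mu> (contr Y) \<Longrightarrow> F X \<le> F Y"
  unfolding incrT_def by blast

lemma Dx_feasible:
  assumes "\<forall>v. feasible_at \<mu> v (\<lambda>_. True)" "Dx \<mu> z"
  shows "feasible_at \<mu> v z"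
proof (cases "z = (\<lambda>_. True)")
  case True then show ?thesis using assms by simp
next
  case False
  then have "0 < pmf \<mu> z" using assms(2) by (simp add: Dx_def)
  moreover have "z = z(v := z v)" by simp
  ultimately show ?thesis unfolding feasible_at_def
    by (cases "z v") (metis add_pos_nonneg pmf_nonneg add_nonneg_pos)+
qed

lemma mono_cond:
  assumes "monotone_system \<mu>" "leB x y" "feasible_at \<mu> v x" "feasible_at \<mu> v y"
  shows "cond1 \<mu> v x \<le> cond1 \<mu> v y"
  using assms unfolding monotone_system_def leB_def by blast

lemma cond_cross:
  fixes p q r s :: real
  assumes "0 \<le> p" "0 \<le> q" "0 \<le> r" "0 \<le> s" "0 < q + p" "0 < s + r"
  shows "q / (q + p) \<le> s / (s + r) \<longleftrightarrow> q * r \<le> s * p"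
  using assms by (simp add: divide_le_eq le_divide_eq algebra_simps)

lemma mono_cross:
  assumes "monotone_system \<mu>" "leB x y" "feasible_at \<mu> v x" "feasible_at \<mu> v y"
  shows "pmf \<mu> (x(v:=True)) * pmf \<mu> (y(v:=False)) \<le> pmf \<mu> (y(v:=True)) * pmf \<mu> (x(v:=False))"
proof -
  have "cond1 \<mu> v x \<le> cond1 \<mu> v y" using mono_cond[OF assms] .
  then show ?thesis using assms(3,4) unfolding cond1_def feasible_at_def
    by (subst (asm) cond_cross) auto
qed

lemma ct_mono:
  assumes "monotone_system \<mu>" "leB x y" "feasible_at \<mu> v x" "feasible_at \<mu> v y" "0 < \<theta>"
  shows "cond1 (tilt \<theta> \<mu>) v x \<le> cond1 (tilt \<theta> \<mu>) v y"
proof -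
  define q where "q = pmf \<mu> (x(v:=True))"
  define p where "p = pmf \<mu> (x(v:=False))"
  define s where "s = pmf \<mu> (y(v:=True))"
  define r where "r = pmf \<mu> (y(v:=False))"
  have cr: "q * r \<le> s * p" using mono_cross[OF assms(1-4)] by (simp add: p_def q_def r_def s_def)
  have pos: "0 < q + p" "0 < s + r" using assms(3,4) by (auto simp: feasible_at_def p_def q_def r_def s_def)
  have nn: "0 \<le> p" "0 \<le> q" "0 \<le> r" "0 \<le> s" by (auto simp: p_def q_def r_def s_def)
  have pos2: "0 < \<theta> * q + p" "0 < \<theta> * s + r"
    using pos nn assms(5) by (auto intro: pos_comb)
  have "\<theta> * q / (\<theta> * q + p) \<le> \<theta> * s / (\<theta> * s + r)"
    using cond_cross[of p "\<theta> * q" r "\<theta> * s"] pos2 nn cr assms(5)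
    by (simp add: mult_left_mono algebra_simps)
  then show ?thesis using assms(5) by (simp add: cond1_tilt p_def q_def r_def s_def)
qed

lemma ct_pos:
  assumes "feasible_at \<mu> v x" "0 < \<theta>"
  shows "0 < cond1 (tilt \<theta> \<mu>) v x \<longleftrightarrow> 0 < pmf \<mu> (x(v:=True))"
proof -
  have d: "0 < \<theta> * pmf \<mu> (x(v:=True)) + pmf \<mu> (x(v:=False))"
    using assms by (intro pos_comb) (auto simp: feasible_at_def add.commute)
  have "0 < \<theta> * pmf \<mu> (x(v:=True)) \<longleftrightarrow> 0 < pmf \<mu> (x(v:=True))"
    using assms(2) by (simp add: zero_less_mult_iff)
  then show ?thesis using d assms(2) by (simp add: cond1_tilt zero_less_divide_iff)
qed

lemma ct_lt1:
  assumes "feasible_at \<mu> v x" "0 < \<theta>"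
  shows "cond1 (tilt \<theta> \<mu>) v x < 1 \<longleftrightarrow> 0 < pmf \<mu> (x(v:=False))"
proof -
  have "0 < \<theta> * pmf \<mu> (x(v:=True)) + pmf \<mu> (x(v:=False))"
    using assms by (intro pos_comb) (auto simp: feasible_at_def add.commute)
  then show ?thesis using assms(2)
    by (simp add: cond1_tilt divide_less_eq_1)
qed

lemma c_pos:
  assumes "feasible_at \<mu> v x"
  shows "0 < cond1 \<mu> v x \<longleftrightarrow> 0 < pmf \<mu> (x(v:=True))"
  using assms by (auto simp: cond1_def feasible_at_def zero_less_divide_iff)

lemma c_lt1:
  assumes "feasible_at \<mu> v x"
  shows "cond1 \<mu> v x < 1 \<longleftrightarrow> 0 < pmf \<mu> (x(v:=False))"
  using assms by (auto simp: cond1_def feasible_at_def divide_less_eq_1)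

lemma two_pt:
  fixes p q a0 a1 b0 b1 :: real
  assumes "0 \<le> p" "p \<le> q" "q \<le> 1" "0 < p \<Longrightarrow> a1 \<le> b1" "q < 1 \<Longrightarrow> a0 \<le> b0" "p < q \<Longrightarrow> a0 \<le> b1"
  shows "p * a1 + (1 - p) * a0 \<le> q * b1 + (1 - q) * b0"
proof -
  have e: "q * b1 + (1 - q) * b0 - (p * a1 + (1 - p) * a0) = p * (b1 - a1) + (1 - q) * (b0 - a0) + (q - p) * (b1 - a0)"
    by (simp add: algebra_simps)
  have 1: "0 \<le> p * (b1 - a1)"
  proof (cases "p = 0")
    case False then show ?thesis using assms(1,4) by (intro mult_nonneg_nonneg) auto
  qed simp
  have 2: "0 \<le> (1 - q) * (b0 - a0)"
  proof (cases "q = 1")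
    case False then show ?thesis using assms(3,5) by (intro mult_nonneg_nonneg) auto
  qed simp
  have 3: "0 \<le> (q - p) * (b1 - a0)"
  proof (cases "p = q")
    case False then show ?thesis using assms(2,6) by (intro mult_nonneg_nonneg) auto
  qed simp
  show ?thesis using e 1 2 3 by linarith
qed

lemma leT_contr: "leT X Y \<Longrightarrow> leB (contr X) (contr Y)"
  unfolding leT_def leB_def contr_def
proof (intro allI impI)
  fix v assume "\<forall>v. rk (X v) \<le> rk (Y v)" "X v \<noteq> Zero"
  then show "Y v \<noteq> Zero" by (cases "X v"; cases "Y v") (auto dest: spec[of _ v])
qed

lemma contr_phi[simp]: "contr (phi x B) = x"
  by (auto simp: contr_def phi_def fun_eq_iff)

lemma contr_upd[simp]: "contr (X(v := One)) = (contr X)(v := True)" "contr (X(v := Star)) = (contr X)(v := True)"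
  "contr (X(v := Zero)) = (contr X)(v := False)"
  by (auto simp: contr_def fun_eq_iff)

lemma Dx_pos: "0 < pmf \<mu> z \<Longrightarrow> Dx \<mu> z"
  by (simp add: Dx_def)



lemma Kv_mono:
  assumes ms: "monotone_system \<mu>" and A6: "\<forall>v. feasible_at \<mu> v (\<lambda>_. True)" and th: "0 < \<theta>"
    and F: "incrT \<mu> F" and le: "leT X Y" and dX: "Dx \<mu> (contr X)" and dY: "Dx \<mu> (contr Y)"
  shows "Kv \<theta> \<mu> v F X \<le> Kv \<theta> \<mu> v F Y"
proof -
  define x where "x = contr X"
  define y where "y = contr Y"
  have fx: "feasible_at \<mu> v x" using Dx_feasible[OF A6] dX x_def by blast
  have fy: "feasible_at \<mu> v y" using Dx_feasible[OF A6] dY y_def by blast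
  have lexy: "leB x y" using leT_contr[OF le] x_def y_def by simp
  define p where "p = cond1 (tilt \<theta> \<mu>) v x"
  define q where "q = cond1 (tilt \<theta> \<mu>) v y"
  have pq: "p \<le> q" using ct_mono[OF ms lexy fx fy th] p_def q_def by simp
  have p0: "0 \<le> p" using cond1_nonneg p_def by simp
  have q1: "q \<le> 1" using cond1_le1 q_def by simp
  have le_upd: "leT (X(v := a)) (Y(v := b))" if "rk a \<le> rk b" for a b
    using le that by (auto simp: leT_def)
  have leY: "leT (X(v := a)) Y" if "rk a \<le> rk (Y v)" for a
    using le_upd[OF that] by (metis fun_upd_triv)
  have px: "0 < p \<Longrightarrow> Dx \<mu> (x(v:=True))" using ct_pos[OF fx th] p_def Dx_pos by blast
  have px0: "p < 1 \<Longrightarrow> Dx \<mu> (x(v:=False))" using ct_lt1[OF fx th] p_def Dx_pos by blast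
  have qy: "0 < q \<Longrightarrow> Dx \<mu> (y(v:=True))" using ct_pos[OF fy th] q_def Dx_pos by blast
  have qy0: "q < 1 \<Longrightarrow> Dx \<mu> (y(v:=False))" using ct_lt1[OF fy th] q_def Dx_pos by blast
  show ?thesis
  proof (cases "X v = Star")
    case True
    have "rk (X v) \<le> rk (Y v)" using le unfolding leT_def by blast
    then have "Y v = Star" using True by (cases "Y v") auto
    then show ?thesis using True incrTD[OF F le dX dY] by (simp add: Kv_def)
  next
    case XS: False
    show ?thesis
    proof (cases "Y v = Star")
      case True
      have "p * F (X(v := One)) + (1 - p) * F (X(v := Zero)) \<le> 1 * F Y + (1 - 1) * F Y"
      proof (rule two_pt)
        show "0 < p \<Longrightarrow> F (X(v := One)) \<le> F Y"
          using px True by (intro incrTD[OF F _ _ dY] leY) (auto simp: x_def)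
        show "p < 1 \<Longrightarrow> F (X(v := Zero)) \<le> F Y"
          using px0 True by (intro incrTD[OF F _ _ dY] leY) (auto simp: x_def)
      qed (use p0 pq q1 in auto)
      then show ?thesis using True XS by (simp add: Kv_def p_def x_def)
    next
      case YS: False
      have "p * F (X(v := One)) + (1 - p) * F (X(v := Zero)) \<le> q * F (Y(v := One)) + (1 - q) * F (Y(v := Zero))"
      proof (rule two_pt[OF p0 pq q1])
        show "0 < p \<Longrightarrow> F (X(v := One)) \<le> F (Y(v := One))"
          using px qy pq by (intro incrTD[OF F] le_upd) (auto simp: x_def y_def)
        show "q < 1 \<Longrightarrow> F (X(v := Zero)) \<le> F (Y(v := Zero))"
          using px0 qy0 pq by (intro incrTD[OF F] le_upd) (auto simp: x_def y_def)
        show "p < q \<Longrightarrow> F (X(v := Zero)) \<le> F (Y(v := One))"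
          using px0 qy pq p0 q1 by (intro incrTD[OF F] le_upd) (auto simp: x_def y_def)
      qed
      then show ?thesis using XS YS by (simp add: Kv_def p_def q_def x_def y_def)
    qed
  qed
qed


lemma pair_ineq:
  fixes a0 a1 m0 m1 \<theta> M0 M1 Ms :: real
  assumes th: "0 < \<theta>" "\<theta> < 1" and nn: "0 \<le> a0" "0 \<le> a1" "0 \<le> m0" "0 \<le> m1"
    and z: "m0 + m1 = 0 \<Longrightarrow> a0 = 0 \<and> a1 = 0"
    and r: "a0 * m1 \<le> a1 * m0"
    and h1: "a0 * m1 < a1 * m0 \<Longrightarrow> M1 \<le> Ms"
    and h2: "a0 * m1 < a1 * m0 \<Longrightarrow> 0 < m0 \<Longrightarrow> M0 \<le> M1"
  shows "(a0 + a1) * (m1 / (m0 + m1) * (\<theta> * M1 + (1 - \<theta>) * Ms) + (1 - m1 / (m0 + m1)) * M0)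
    \<le> a0 * (\<theta> * m1 / (\<theta> * m1 + m0) * M1 + (1 - \<theta> * m1 / (\<theta> * m1 + m0)) * M0)
      + a1 * (\<theta> * (\<theta> * m1 / (\<theta> * m1 + m0) * M1 + (1 - \<theta> * m1 / (\<theta> * m1 + m0)) * M0) + (1 - \<theta>) * Ms)"
    (is "?L \<le> ?R")
proof (cases "m0 + m1 = 0")
  case True
  then show ?thesis using z by simp
next
  case False
  define S where "S = m0 + m1"
  define T where "T = \<theta> * m1 + m0"
  have S: "0 < S" using False nn S_def by simp
  have T: "0 < T" using pos_comb[of m1 m0 \<theta>] S nn th by (simp add: S_def T_def add.commute)
  define c where "c = m1 / (m0 + m1)"
  define ct where "ct = \<theta> * m1 / (\<theta> * m1 + m0)"
  have eS: "c * (m0 + m1) = m1" using S by (simp add: c_def S_def)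
  have eT: "ct * (\<theta> * m1 + m0) = \<theta> * m1" using T by (simp add: ct_def T_def)
  define d where "d = (1 - \<theta>) * (a1 * m0 - a0 * m1)"
  have id: "(a0 * (ct * M1 + (1 - ct) * M0) + a1 * (\<theta> * (ct * M1 + (1 - ct) * M0) + (1 - \<theta>) * Ms)
      - (a0 + a1) * (c * (\<theta> * M1 + (1 - \<theta>) * Ms) + (1 - c) * M0)) * ((m0 + m1) * (\<theta> * m1 + m0))
     = d * ((\<theta> * m1 + m0) * (Ms - M1) + m0 * (M1 - M0))"
  proof -
    define X1 where "X1 = (a0 + \<theta> * a1) * (M1 - M0)"
    define Y where "Y = (a0 + \<theta> * a1) * M0 + a1 * (1 - \<theta>) * Ms - (a0 + a1) * M0"
    define X2 where "X2 = (a0 + a1) * (\<theta> * M1 + (1 - \<theta>) * Ms - M0)"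
    have e1: "a0 * (ct * M1 + (1 - ct) * M0) + a1 * (\<theta> * (ct * M1 + (1 - ct) * M0) + (1 - \<theta>) * Ms)
      - (a0 + a1) * (c * (\<theta> * M1 + (1 - \<theta>) * Ms) + (1 - c) * M0) = ct * X1 + Y - c * X2"
      unfolding X1_def Y_def X2_def by (simp add: algebra_simps)
    have e2: "(ct * X1 + Y - c * X2) * ((m0 + m1) * (\<theta> * m1 + m0))
       = (ct * (\<theta> * m1 + m0)) * X1 * (m0 + m1) + Y * ((m0 + m1) * (\<theta> * m1 + m0)) - (c * (m0 + m1)) * X2 * (\<theta> * m1 + m0)"
      by (simp add: algebra_simps)
    have e3: "(\<theta> * m1) * X1 * (m0 + m1) + Y * ((m0 + m1) * (\<theta> * m1 + m0)) - m1 * X2 * (\<theta> * m1 + m0)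
       = d * ((\<theta> * m1 + m0) * (Ms - M1) + m0 * (M1 - M0))"
      unfolding X1_def Y_def X2_def d_def by algebra
    show ?thesis unfolding e1 e2 eS eT e3 by (rule refl)
  qed
  have d0: "0 \<le> d" using r th by (simp add: d_def)
  have inner: "0 \<le> d * ((\<theta> * m1 + m0) * (Ms - M1) + m0 * (M1 - M0))"
  proof (cases "d = 0")
    case False
    then have lt: "a0 * m1 < a1 * m0" using r th by (simp add: d_def)
    have "0 \<le> (\<theta> * m1 + m0) * (Ms - M1)" using h1[OF lt] T T_def by simp
    moreover have "0 \<le> m0 * (M1 - M0)"
    proof (cases "m0 = 0")
      case False then show ?thesis using h2[OF lt] nn by simp
    qed simp
    ultimately show ?thesis using d0 by simp
  qed simp
  have "0 \<le> (a0 * (ct * M1 + (1 - ct) * M0) + a1 * (\<theta> * (ct * M1 + (1 - ct) * M0) + (1 - \<theta>) * Ms)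
      - (a0 + a1) * (c * (\<theta> * M1 + (1 - \<theta>) * Ms) + (1 - c) * M0))"
  proof -
    have pST: "0 < (m0 + m1) * (\<theta> * m1 + m0)" using S T unfolding S_def T_def by simp
    have h0: "0 \<le> (a0 * (ct * M1 + (1 - ct) * M0) + a1 * (\<theta> * (ct * M1 + (1 - ct) * M0) + (1 - \<theta>) * Ms)
      - (a0 + a1) * (c * (\<theta> * M1 + (1 - \<theta>) * Ms) + (1 - c) * M0)) * ((m0 + m1) * (\<theta> * m1 + m0))"
      by (subst id) (rule inner)
    show ?thesis using h0 pST by (simp add: zero_le_mult_iff)
  qed
  then show ?thesis unfolding c_def ct_def by simp
qed

definition Lam :: "real \<Rightarrow> (('v::finite \<Rightarrow> tri) \<Rightarrow> real) \<Rightarrow> ('v \<Rightarrow> bool) \<Rightarrow> real" where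
  "Lam \<theta> F x = E (beta \<theta>) (\<lambda>B. F (phi x B))"

definition Mv :: "real \<Rightarrow> (('v::finite \<Rightarrow> tri) \<Rightarrow> real) \<Rightarrow> ('v \<Rightarrow> bool) \<Rightarrow> 'v \<Rightarrow> tri \<Rightarrow> real" where
  "Mv \<theta> F x v b = E (beta \<theta>) (\<lambda>B. F ((phi x B)(v := b)))"

lemma Lam_lift: "E (lift \<theta> x) F = Lam \<theta> F x"
  by (simp add: E_lift Lam_def)

lemma phi_upd: "phi x (B(v := b)) = (phi x B)(v := (if x v then (if b then One else Star) else Zero))"
  by (auto simp: phi_def fun_eq_iff)

lemma Mv_upd[simp]: "Mv \<theta> F (x(v := c)) v b = Mv \<theta> F x v b"
proof -
  have "(phi (x(v := c)) B)(v := b) = (phi x B)(v := b)" for B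
    by (auto simp: phi_def fun_eq_iff)
  then show ?thesis by (simp add: Mv_def)
qed

lemma Lam_decomp:
  assumes "0 \<le> \<theta>" "\<theta> \<le> 1"
  shows "Lam \<theta> F x = (if x v then \<theta> * Mv \<theta> F x v One + (1 - \<theta>) * Mv \<theta> F x v Star else Mv \<theta> F x v Zero)"
proof -
  have "Lam \<theta> F x = \<theta> * E (beta \<theta>) (\<lambda>B. F (phi x (B(v := True)))) + (1 - \<theta>) * E (beta \<theta>) (\<lambda>B. F (phi x (B(v := False))))"
    unfolding Lam_def by (rule E_beta_resample[OF assms])
  then show ?thesis
    by (cases "x v") (simp_all add: phi_upd Mv_def algebra_simps)
qed

lemma Lam_Kv:
  assumes "0 \<le> \<theta>" "\<theta> \<le> 1"
  shows "Lam \<theta> (Kv \<theta> \<mu> v F) x = (let ct = cond1 (tilt \<theta> \<mu>) v x in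
     if x v then \<theta> * (ct * Mv \<theta> F x v One + (1 - ct) * Mv \<theta> F x v Zero) + (1 - \<theta>) * Mv \<theta> F x v Star
     else ct * Mv \<theta> F x v One + (1 - ct) * Mv \<theta> F x v Zero)"
proof -
  define ct where "ct = cond1 (tilt \<theta> \<mu>) v x"
  have base: "Lam \<theta> (Kv \<theta> \<mu> v F) x = \<theta> * E (beta \<theta>) (\<lambda>B. Kv \<theta> \<mu> v F (phi x (B(v := True))))
     + (1 - \<theta>) * E (beta \<theta>) (\<lambda>B. Kv \<theta> \<mu> v F (phi x (B(v := False))))"
    unfolding Lam_def by (rule E_beta_resample[OF assms])
  have ctc: "cond1 (tilt \<theta> \<mu>) v ((contr (phi x B))(v := b)) = ct" for B b
    by (simp add: ct_def)
  have Ksplit: "Kv \<theta> \<mu> v F ((phi x B)(v := b)) = ct * F ((phi x B)(v := One)) + (1 - ct) * F ((phi x B)(v := Zero))"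
    if "b \<noteq> Star" for B b
    using that ctc by (cases b) (simp_all add: Kv_def ct_def)
  have EK: "E (beta \<theta>) (\<lambda>B. Kv \<theta> \<mu> v F ((phi x B)(v := b))) = ct * Mv \<theta> F x v One + (1 - ct) * Mv \<theta> F x v Zero"
    if "b \<noteq> Star" for b
    using Ksplit[OF that] by (simp add: E_add E_cmult Mv_def)
  have EKs: "E (beta \<theta>) (\<lambda>B. Kv \<theta> \<mu> v F ((phi x B)(v := Star))) = Mv \<theta> F x v Star"
    by (simp add: Kv_def Mv_def)
  show ?thesis
  proof (cases "x v")
    case True
    then show ?thesis using base EK[of One] EKs by (simp add: phi_upd ct_def Let_def)
  next
    case False
    then have "Lam \<theta> (Kv \<theta> \<mu> v F) x = \<theta> * (ct * Mv \<theta> F x v One + (1 - ct) * Mv \<theta> F x v Zero)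
       + (1 - \<theta>) * (ct * Mv \<theta> F x v One + (1 - ct) * Mv \<theta> F x v Zero)"
      using base EK[of Zero] by (simp add: phi_upd)
    then show ?thesis using False by (simp add: ct_def Let_def algebra_simps)
  qed
qed

lemma sum_pair:
  fixes G :: "('v::finite \<Rightarrow> bool) \<Rightarrow> real"
  shows "(\<Sum>x\<in>UNIV. G x) = (\<Sum>x\<in>{x. \<not> x v}. G x + G (x(v := True)))"
proof -
  have "(\<Sum>x\<in>UNIV. G x) = (\<Sum>x\<in>{x. \<not> x v}. G x) + (\<Sum>x\<in>{x. x v}. G x)"
    by (subst sum.union_disjoint[symmetric]) (auto intro: sum.cong)
  moreover have "(\<Sum>x\<in>{x. x v}. G x) = (\<Sum>x\<in>{x. \<not> x v}. G (x(v := True)))"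
  proof (rule sum.reindex_bij_witness[where j = "\<lambda>x. x(v := False)" and i = "\<lambda>x. x(v := True)"])
  qed (auto simp: fun_eq_iff fun_upd_idem)
  ultimately show ?thesis by (simp add: sum.distrib)
qed



lemma four_pt:
  fixes p q r s A B C D :: real
  assumes nn: "0 \<le> p" "0 \<le> q" "0 \<le> r" "0 \<le> s" "0 \<le> A" "0 \<le> B" "0 \<le> C" "0 \<le> D"
    and r1: "A * q \<le> B * p" and r2: "A * r \<le> C * p" and r3: "A * s \<le> D * p"
    and r4: "B * s \<le> D * q" and r5: "C * s \<le> D * r" and cr: "q * r \<le> s * p"
    and zq: "q = 0 \<Longrightarrow> B = 0" and zr: "r = 0 \<Longrightarrow> C = 0"
  shows "(A + B) * (r + s) \<le> (C + D) * (p + q)"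
proof -
  have key: "B * r + A * s \<le> C * q + D * p"
  proof (cases "q = 0 \<or> r = 0")
    case True
    then show ?thesis
    proof
      assume "q = 0" then show ?thesis using zq r3 nn by simp
    next
      assume "r = 0" then show ?thesis using zr r3 nn by (simp add: mult_nonneg_nonneg)
    qed
  next
    case False
    then have qr: "0 < q * r" using nn by (simp add: less_le)
    show ?thesis
    proof (cases "B * r \<le> C * q")
      case True then show ?thesis using r3 by linarith
    next
      case False
      then have pos: "0 \<le> B * r - C * q" by simp
      have "(B * r - C * q) * (q * r) \<le> (B * r - C * q) * (s * p)"
        by (rule mult_left_mono[OF cr pos])
      also have "\<dots> = (p * r) * (B * s) - (q * s) * (C * p)" by (simp add: algebra_simps)
      also have "\<dots> \<le> (p * r) * (D * q) - (q * s) * (A * r)"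
      proof -
        have "(p * r) * (B * s) \<le> (p * r) * (D * q)" using r4 nn by (intro mult_left_mono) auto
        moreover have "(q * s) * (A * r) \<le> (q * s) * (C * p)" using r2 nn by (intro mult_left_mono) auto
        ultimately show ?thesis by linarith
      qed
      also have "\<dots> = (D * p - A * s) * (q * r)" by (simp add: algebra_simps)
      finally have "B * r - C * q \<le> D * p - A * s"
        using qr by (simp add: mult_le_cancel_right_pos)
      then show ?thesis by linarith
    qed
  qed
  show ?thesis using key r2 r4 by (simp add: algebra_simps)
qed

definition RP :: "('v::finite \<Rightarrow> bool) pmf \<Rightarrow> ('v \<Rightarrow> bool) pmf \<Rightarrow> bool" where
  "RP \<mu> \<nu> \<longleftrightarrow> (\<forall>z. 0 < pmf \<nu> z \<longrightarrow> Dx \<mu> z) \<and>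
     (\<forall>x y. leB x y \<longrightarrow> pmf \<nu> x * pmf \<mu> y \<le> pmf \<nu> y * pmf \<mu> x)"

lemma leB_top: "leB (\<lambda>_. True) y \<Longrightarrow> y = (\<lambda>_. True)"
  by (auto simp: leB_def fun_eq_iff)

lemma RP_0: "RP \<mu> (return_pmf (\<lambda>_. True))"
  for \<mu> :: "('v::finite \<Rightarrow> bool) pmf"
  unfolding RP_def
proof (intro conjI allI impI)
  fix z :: "'v \<Rightarrow> bool" assume "0 < pmf (return_pmf (\<lambda>_. True)) z"
  then show "Dx \<mu> z" by (auto simp: pmf_return Dx_def split: if_splits)
next
  fix x y :: "'v \<Rightarrow> bool" assume le: "leB x y"
  show "pmf (return_pmf (\<lambda>_. True)) x * pmf \<mu> y \<le> pmf (return_pmf (\<lambda>_. True)) y * pmf \<mu> x"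
  proof (cases "x = (\<lambda>_. True)")
    case True
    then have "y = x" using leB_top le by simp
    then show ?thesis by simp
  qed (simp add: pmf_return)
qed

lemma sum_upd_eq:
  fixes h :: "('v::finite \<Rightarrow> bool) \<Rightarrow> real"
  shows "(\<Sum>x\<in>UNIV. h x * (if x(v := b) = y then 1 else 0)) =
         (if y v = b then h (y(v := False)) + h (y(v := True)) else 0)"
proof -
  have "(\<Sum>x\<in>UNIV. h x * (if x(v := b) = y then 1 else 0)) =
        (\<Sum>x\<in>{x. \<not> x v}. (if x = y(v := False) \<and> y v = b then h x + h (x(v := True)) else 0))"
  proof (subst sum_pair[of _ v], rule sum.cong)
    fix x assume "x \<in> {x. \<not> x v}"
    then have nx: "\<not> x v" by simp
    have e: "(x(v := True))(v := b) = x(v := b)" by simp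
    have iff: "x(v := b) = y \<longleftrightarrow> x = y(v := False) \<and> y v = b"
      using nx by (auto simp: fun_eq_iff)
    show "h x * (if x(v := b) = y then 1 else 0) + h (x(v := True)) * (if (x(v := True))(v := b) = y then 1 else 0) =
          (if x = y(v := False) \<and> y v = b then h x + h (x(v := True)) else 0)"
      unfolding e iff by auto
  qed simp
  also have "\<dots> = (if y v = b then h (y(v := False)) + h (y(v := True)) else 0)"
  proof (cases "y v = b")
    case True
    have "(\<Sum>x\<in>{x. \<not> x v}. (if x = y(v := False) \<and> y v = b then h x + h (x(v := True)) else 0))
        = (\<Sum>x\<in>{x. \<not> x v}. (if x = y(v := False) then h x + h (x(v := True)) else 0))"
      using True by simp
    also have "\<dots> = h (y(v := False)) + h (y(v := True))"
      by (subst sum.delta) auto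
    finally show ?thesis using True by simp
  qed simp
  finally show ?thesis .
qed


lemma pmf_E: "pmf p y = E p (\<lambda>z. if z = y then 1 else 0)"
  by (simp add: E_def if_distrib cong: if_cong)

lemma pmf_gbind:
  fixes \<nu> :: "('v::finite \<Rightarrow> bool) pmf"
  shows "pmf (\<nu> \<bind> glauber_step \<mu>) y = (\<Sum>v\<in>UNIV. (pmf \<nu> (y(v:=False)) + pmf \<nu> (y(v:=True))) *
      (if y v then cond1 \<mu> v y else 1 - cond1 \<mu> v y)) / card (UNIV :: 'v set)"
proof -
  define n where "n = real (card (UNIV :: 'v set))"
  have "pmf (\<nu> \<bind> glauber_step \<mu>) y = (\<Sum>x\<in>UNIV. pmf \<nu> x *
     ((\<Sum>v\<in>UNIV. cond1 \<mu> v x * (if x(v := True) = y then 1 else 0) + (1 - cond1 \<mu> v x) * (if x(v := False) = y then 1 else 0)) / n))"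
    unfolding pmf_bind_fin by (simp add: pmf_E[of "glauber_step \<mu> _"] E_gstep n_def)
  also have "\<dots> = (\<Sum>v\<in>UNIV. (\<Sum>x\<in>UNIV. (pmf \<nu> x * cond1 \<mu> v x) * (if x(v := True) = y then 1 else 0))
      + (\<Sum>x\<in>UNIV. (pmf \<nu> x * (1 - cond1 \<mu> v x)) * (if x(v := False) = y then 1 else 0))) / n"
  proof -
    have "\<And>x. pmf \<nu> x * ((\<Sum>v\<in>UNIV. cond1 \<mu> v x * (if x(v := True) = y then 1 else 0) + (1 - cond1 \<mu> v x) * (if x(v := False) = y then 1 else 0)) / n)
       = (\<Sum>v\<in>UNIV. (pmf \<nu> x * cond1 \<mu> v x) * (if x(v := True) = y then 1 else 0) + (pmf \<nu> x * (1 - cond1 \<mu> v x)) * (if x(v := False) = y then 1 else 0)) / n"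
      by (simp only: times_divide_eq_right sum_distrib_left distrib_left mult.assoc)
    then have "(\<Sum>x\<in>UNIV. pmf \<nu> x * ((\<Sum>v\<in>UNIV. cond1 \<mu> v x * (if x(v := True) = y then 1 else 0) + (1 - cond1 \<mu> v x) * (if x(v := False) = y then 1 else 0)) / n))
       = (\<Sum>x\<in>UNIV. \<Sum>v\<in>UNIV. (pmf \<nu> x * cond1 \<mu> v x) * (if x(v := True) = y then 1 else 0) + (pmf \<nu> x * (1 - cond1 \<mu> v x)) * (if x(v := False) = y then 1 else 0)) / n"
      by (simp only: sum_divide_distrib)
    also have "\<dots> = (\<Sum>v\<in>UNIV. \<Sum>x\<in>UNIV. (pmf \<nu> x * cond1 \<mu> v x) * (if x(v := True) = y then 1 else 0) + (pmf \<nu> x * (1 - cond1 \<mu> v x)) * (if x(v := False) = y then 1 else 0)) / n"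
      by (subst sum.swap) (rule refl)
    also have "\<dots> = (\<Sum>v\<in>UNIV. (\<Sum>x\<in>UNIV. (pmf \<nu> x * cond1 \<mu> v x) * (if x(v := True) = y then 1 else 0))
      + (\<Sum>x\<in>UNIV. (pmf \<nu> x * (1 - cond1 \<mu> v x)) * (if x(v := False) = y then 1 else 0))) / n"
      by (simp only: sum.distrib)
    finally show ?thesis .
  qed
  also have "\<dots> = (\<Sum>v\<in>UNIV. (pmf \<nu> (y(v:=False)) + pmf \<nu> (y(v:=True))) *
      (if y v then cond1 \<mu> v y else 1 - cond1 \<mu> v y)) / n"
    unfolding sum_upd_eq by (intro arg_cong[where f = "\<lambda>t. t / n"] sum.cong refl) (simp add: distrib_right)
  finally show ?thesis by (simp add: n_def)
qed


lemma RP_supp: "RP \<mu> \<nu> \<Longrightarrow> 0 < pmf \<nu> z \<Longrightarrow> Dx \<mu> z"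
  unfolding RP_def by blast

lemma RP_ratio: "RP \<mu> \<nu> \<Longrightarrow> leB x y \<Longrightarrow> pmf \<nu> x * pmf \<mu> y \<le> pmf \<nu> y * pmf \<mu> x"
  unfolding RP_def by blast

lemma leB_upd: "leB x y \<Longrightarrow> b \<le> c \<Longrightarrow> leB (x(v := b)) (y(v := c))"
  by (auto simp: leB_def)

lemma mpos: "0 < pmf \<mu> x \<Longrightarrow> 0 < pmf \<mu> (x(v:=False)) + pmf \<mu> (x(v:=True))"
proof -
  assume h: "0 < pmf \<mu> x"
  have nn: "0 \<le> pmf \<mu> (x(v:=False))" "0 \<le> pmf \<mu> (x(v:=True))" by simp_all
  show ?thesis
  proof (cases "x v")
    case True
    then have "x(v := True) = x" by (simp add: fun_upd_idem)
    then have "pmf \<mu> (x(v:=True)) = pmf \<mu> x" by simp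
    then show ?thesis using h nn by linarith
  next
    case False
    then have "x(v := False) = x" by (simp add: fun_upd_idem)
    then have "pmf \<mu> (x(v:=False)) = pmf \<mu> x" by simp
    then show ?thesis using h nn by linarith
  qed
qed

lemma quot_mono:
  fixes \<mu> \<nu> :: "('v::finite \<Rightarrow> bool) pmf"
  assumes ms: "monotone_system \<mu>" and A6: "\<forall>v. feasible_at \<mu> v (\<lambda>_. True)" and R: "RP \<mu> \<nu>"
    and le: "leB x y" and px: "0 < pmf \<mu> x" and py: "0 < pmf \<mu> y"
  shows "(pmf \<nu> (x(v:=False)) + pmf \<nu> (x(v:=True))) / (pmf \<mu> (x(v:=False)) + pmf \<mu> (x(v:=True)))
       \<le> (pmf \<nu> (y(v:=False)) + pmf \<nu> (y(v:=True))) / (pmf \<mu> (y(v:=False)) + pmf \<mu> (y(v:=True)))"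
proof (cases "\<forall>u. u \<noteq> v \<longrightarrow> x u = y u")
  case True
  then have "x(v := b) = y(v := b)" for b by (auto simp: fun_eq_iff)
  then show ?thesis by simp
next
  case False
  then obtain u where u: "u \<noteq> v" "\<not> x u" "y u" using le by (auto simp: leB_def)
  define A where "A = pmf \<nu> (x(v:=False))"
  define B where "B = pmf \<nu> (x(v:=True))"
  define C where "C = pmf \<nu> (y(v:=False))"
  define D where "D = pmf \<nu> (y(v:=True))"
  define p where "p = pmf \<mu> (x(v:=False))"
  define q where "q = pmf \<mu> (x(v:=True))"
  define r where "r = pmf \<mu> (y(v:=False))"
  define s where "s = pmf \<mu> (y(v:=True))"
  have ntop: "x(v := b) \<noteq> (\<lambda>_. True)" "y(v := False) \<noteq> (\<lambda>_. True)" for b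
    using u by (auto simp: fun_eq_iff)
  have supp: "0 < pmf \<nu> z \<Longrightarrow> z \<noteq> (\<lambda>_. True) \<Longrightarrow> 0 < pmf \<mu> z" for z
    using RP_supp[OF R] by (auto simp: Dx_def)
  have fx: "feasible_at \<mu> v x" and fy: "feasible_at \<mu> v y"
    using Dx_feasible[OF A6] px py by (auto simp: Dx_def)
  have "(A + B) * (r + s) \<le> (C + D) * (p + q)"
  proof (rule four_pt)
    show "A * q \<le> B * p" unfolding A_def B_def p_def q_def by (rule RP_ratio[OF R]) (auto simp: leB_def)
    show "A * r \<le> C * p" unfolding A_def C_def p_def r_def by (rule RP_ratio[OF R]) (use le in \<open>auto simp: leB_def\<close>)
    show "A * s \<le> D * p" unfolding A_def D_def p_def s_def by (rule RP_ratio[OF R]) (use le in \<open>auto simp: leB_def\<close>)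
    show "B * s \<le> D * q" unfolding B_def D_def q_def s_def by (rule RP_ratio[OF R]) (use le in \<open>auto simp: leB_def\<close>)
    show "C * s \<le> D * r" unfolding C_def D_def r_def s_def by (rule RP_ratio[OF R]) (auto simp: leB_def)
    show "q * r \<le> s * p" unfolding p_def q_def r_def s_def by (rule mono_cross[OF ms le fx fy])
    show "q = 0 \<Longrightarrow> B = 0"
    proof -
      assume q0: "q = 0"
      have "\<not> 0 < B" using supp[of "x(v:=True)"] ntop(1)[of True] q0 unfolding q_def B_def by auto
      then show "B = 0" using pmf_nonneg[of \<nu> "x(v:=True)"] unfolding B_def by linarith
    qed
    show "r = 0 \<Longrightarrow> C = 0"
    proof -
      assume r0: "r = 0"
      have "\<not> 0 < C" using supp[of "y(v:=False)"] ntop(2) r0 unfolding r_def C_def by auto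
      then show "C = 0" using pmf_nonneg[of \<nu> "y(v:=False)"] unfolding C_def by linarith
    qed
  qed (auto simp: A_def B_def C_def D_def p_def q_def r_def s_def)
  moreover have "0 < p + q" "0 < r + s" using mpos[OF px, of v] mpos[OF py, of v]
    by (auto simp: p_def q_def r_def s_def)
  ultimately have "(A + B) / (p + q) \<le> (C + D) / (r + s)"
  proof -
    assume h: "(A + B) * (r + s) \<le> (C + D) * (p + q)" and pq: "0 < p + q" "0 < r + s"
    have e1: "(A + B) / (p + q) = (A + B) * (r + s) / ((p + q) * (r + s))" using pq by simp
    have e2: "(C + D) / (r + s) = (C + D) * (p + q) / ((p + q) * (r + s))" using pq by simp
    show ?thesis unfolding e1 e2 using h pq by (intro divide_right_mono) auto
  qed
  then show ?thesis by (simp add: A_def B_def C_def D_def p_def q_def r_def s_def)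
qed


lemma W_eq:
  assumes "0 < pmf \<mu> z"
  shows "(if z v then cond1 \<mu> v z else 1 - cond1 \<mu> v z) = pmf \<mu> z / (pmf \<mu> (z(v:=False)) + pmf \<mu> (z(v:=True)))"
proof -
  have m: "0 < pmf \<mu> (z(v:=False)) + pmf \<mu> (z(v:=True))" using mpos[OF assms] .
  show ?thesis
  proof (cases "z v")
    case True
    then have "z(v := True) = z" by (simp add: fun_upd_idem)
    then show ?thesis using True by (simp add: cond1_def add.commute)
  next
    case False
    then have e: "z(v := False) = z" by (simp add: fun_upd_idem)
    have "1 - cond1 \<mu> v z = pmf \<mu> (z(v:=False)) / (pmf \<mu> (z(v:=False)) + pmf \<mu> (z(v:=True)))"
      using m unfolding cond1_def by (simp add: field_simps add.commute)
    then show ?thesis using False e by simp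
  qed
qed

lemma card_pos: "0 < real (card (UNIV :: 'v::finite set))"
  by simp

lemma RP_step:
  fixes \<mu> \<nu> :: "('v::finite \<Rightarrow> bool) pmf"
  assumes ms: "monotone_system \<mu>" and A6: "\<forall>v. feasible_at \<mu> v (\<lambda>_. True)" and R: "RP \<mu> \<nu>"
  shows "RP \<mu> (\<nu> \<bind> glauber_step \<mu>)"
proof -
  define n where "n = real (card (UNIV :: 'v set))"
  have n: "0 < n" using card_pos n_def by simp
  define S where "S = (\<lambda>v z. pmf \<nu> (z(v:=False)) + pmf \<nu> (z(v:=True)))"
  define W where "W = (\<lambda>v (z :: 'v \<Rightarrow> bool). if z v then cond1 \<mu> v z else 1 - cond1 \<mu> v z)"
  define m where "m = (\<lambda>v z. pmf \<mu> (z(v:=False)) + pmf \<mu> (z(v:=True)))"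
  have form: "pmf (\<nu> \<bind> glauber_step \<mu>) y = (\<Sum>v\<in>UNIV. S v y * W v y) / n" for y
    unfolding pmf_gbind S_def W_def n_def by (rule refl)
  have S0: "0 \<le> S v z" for v z by (simp add: S_def)
  have W0: "0 \<le> W v z" for v z using cond1_nonneg[of \<mu> v z] cond1_le1[of \<mu> v z] by (simp add: W_def)
  have supp: "Dx \<mu> y" if pos: "0 < pmf (\<nu> \<bind> glauber_step \<mu>) y" for y
  proof -
    have "0 < (\<Sum>v\<in>UNIV. S v y * W v y)" using pos n form[of y] by (simp add: zero_less_divide_iff)
    have "\<exists>v. 0 < S v y * W v y"
    proof (rule ccontr)
      assume "\<not> (\<exists>v. 0 < S v y * W v y)"
      then have "(\<Sum>v\<in>UNIV. S v y * W v y) \<le> 0" by (intro sum_nonpos) (simp add: not_less)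
      then show False using \<open>0 < (\<Sum>v\<in>UNIV. S v y * W v y)\<close> by simp
    qed
    then obtain v where v: "0 < S v y * W v y" by blast
    have Sp: "0 < S v y" and Wp: "0 < W v y" using v S0[of v y] W0[of v y]
      by (auto simp: zero_less_mult_iff)
    have "\<exists>b. 0 < pmf \<nu> (y(v := b))"
    proof (rule ccontr)
      assume "\<not> (\<exists>b. 0 < pmf \<nu> (y(v := b)))"
      then have "pmf \<nu> (y(v := False)) = 0" "pmf \<nu> (y(v := True)) = 0"
        using pmf_nonneg[of \<nu>] by (auto simp: not_less intro: antisym)
      then show False using Sp by (simp add: S_def)
    qed
    then obtain b where "0 < pmf \<nu> (y(v := b))" by blast
    then have "Dx \<mu> (y(v := b))" using RP_supp[OF R] by blast
    then have "feasible_at \<mu> v (y(v := b))" using Dx_feasible[OF A6] by blast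
    then have fy: "feasible_at \<mu> v y" by simp
    show ?thesis
    proof (cases "y v")
      case True
      then have "0 < cond1 \<mu> v y" using Wp by (simp add: W_def)
      then have "0 < pmf \<mu> (y(v:=True))" using c_pos[OF fy] by simp
      moreover have "y(v:=True) = y" using True by (simp add: fun_upd_idem)
      ultimately show ?thesis by (simp add: Dx_def)
    next
      case False
      then have "cond1 \<mu> v y < 1" using Wp by (simp add: W_def)
      then have "0 < pmf \<mu> (y(v:=False))" using c_lt1[OF fy] by simp
      moreover have "y(v:=False) = y" using False by (simp add: fun_upd_idem)
      ultimately show ?thesis by (simp add: Dx_def)
    qed
  qed
  have form2: "pmf (\<nu> \<bind> glauber_step \<mu>) z = pmf \<mu> z * ((\<Sum>v\<in>UNIV. S v z / m v z) / n)"
    if "0 < pmf \<mu> z" for z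
  proof -
    have "W v z = pmf \<mu> z / m v z" for v unfolding W_def m_def using W_eq[OF that] by simp
    then have "(\<Sum>v\<in>UNIV. S v z * W v z) = pmf \<mu> z * (\<Sum>v\<in>UNIV. S v z / m v z)"
      by (simp add: sum_distrib_left mult.commute)
    then show ?thesis using form[of z] by simp
  qed
  have ratio: "pmf (\<nu> \<bind> glauber_step \<mu>) x * pmf \<mu> y \<le> pmf (\<nu> \<bind> glauber_step \<mu>) y * pmf \<mu> x"
    if le: "leB x y" for x y
  proof (cases "pmf (\<nu> \<bind> glauber_step \<mu>) x = 0 \<or> pmf \<mu> y = 0")
    case True then show ?thesis by auto
  next
    case False
    then have px': "0 < pmf (\<nu> \<bind> glauber_step \<mu>) x" and py: "0 < pmf \<mu> y"
      by (auto simp: less_le)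
    have dx: "Dx \<mu> x" using supp[OF px'] .
    show ?thesis
    proof (cases "pmf \<mu> x = 0")
      case True
      then have "x = (\<lambda>_. True)" using dx by (simp add: Dx_def)
      then have "y = x" using leB_top le by simp
      then show ?thesis by simp
    next
      case False
      then have px: "0 < pmf \<mu> x" by (simp add: less_le)
      have "(\<Sum>v\<in>UNIV. S v x / m v x) \<le> (\<Sum>v\<in>UNIV. S v y / m v y)"
        using quot_mono[OF ms A6 R le px py] by (intro sum_mono) (simp add: S_def m_def)
      then have "(\<Sum>v\<in>UNIV. S v x / m v x) / n \<le> (\<Sum>v\<in>UNIV. S v y / m v y) / n"
        using n by (simp add: divide_right_mono)
      then have "pmf \<mu> x * pmf \<mu> y * ((\<Sum>v\<in>UNIV. S v x / m v x) / n) \<le> pmf \<mu> x * pmf \<mu> y * ((\<Sum>v\<in>UNIV. S v y / m v y) / n)"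
        using px py by (intro mult_left_mono) auto
      then show ?thesis unfolding form2[OF px] form2[OF py] by (simp add: algebra_simps)
    qed
  qed
  show ?thesis unfolding RP_def using supp ratio by blast
qed



lemma RP_glauber:
  assumes "monotone_system \<mu>" "\<forall>v. feasible_at \<mu> v (\<lambda>_. True)"
  shows "RP \<mu> (glauber \<mu> t)"
  by (induction t) (simp_all add: RP_0 RP_step[OF assms])

lemma leT_phi: "leB x y \<Longrightarrow> leT (phi x B) (phi y B)"
  by (auto simp: leT_def leB_def phi_def)

lemma Lam_mono:
  assumes F: "incrT \<mu> F" and le: "leB x y" and dx: "Dx \<mu> x" and dy: "Dx \<mu> y"
  shows "Lam \<theta> F x \<le> Lam \<theta> F y"
  unfolding Lam_def
  by (intro E_mono incrTD[OF F] leT_phi le) (simp_all add: dx dy)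

lemma incrT_A:
  assumes ms: "monotone_system \<mu>" and A6: "\<forall>v. feasible_at \<mu> v (\<lambda>_. True)" and th: "0 < \<theta>"
    and F: "incrT \<mu> F"
  shows "incrT \<mu> (\<lambda>X. E (alg_step \<theta> \<mu> X) F)"
  unfolding incrT_def E_astep
proof (intro allI impI)
  fix X Y :: "'a \<Rightarrow> tri"
  assume "leT X Y" "Dx \<mu> (contr X)" "Dx \<mu> (contr Y)"
  then have "(\<Sum>v\<in>UNIV. Kv \<theta> \<mu> v F X) \<le> (\<Sum>v\<in>UNIV. Kv \<theta> \<mu> v F Y)"
    by (intro sum_mono Kv_mono[OF ms A6 th F])
  then show "(\<Sum>v\<in>UNIV. Kv \<theta> \<mu> v F X) / real CARD('a) \<le> (\<Sum>v\<in>UNIV. Kv \<theta> \<mu> v F Y) / real CARD('a)"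
    by (simp add: divide_right_mono)
qed

lemma incrT_L:
  assumes H: "incrT \<mu> H"
  shows "incrT \<mu> (\<lambda>X. Lam \<theta> H (contr X))"
  unfolding incrT_def
  by (auto intro!: Lam_mono[OF H] leT_contr)

lemma Lam_contr: "Lam \<theta> (\<lambda>X. G (contr X)) x = G x"
  by (simp add: Lam_def)

lemma Lam_A: "Lam \<theta> (\<lambda>X. E (alg_step \<theta> \<mu> X) F) x = (\<Sum>v\<in>UNIV. Lam \<theta> (Kv \<theta> \<mu> v F) x) / card (UNIV :: 'v::finite set)"
  for x :: "'v::finite \<Rightarrow> bool"
  unfolding Lam_def E_astep by (simp add: E_div E_sum)


lemma key_v:
  fixes \<mu> \<nu> :: "('v::finite \<Rightarrow> bool) pmf"
  assumes ms: "monotone_system \<mu>" and A6: "\<forall>v. feasible_at \<mu> v (\<lambda>_. True)"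
    and th: "0 < \<theta>" "\<theta> < 1" and F: "incrT \<mu> F" and R: "RP \<mu> \<nu>"
  shows "(\<Sum>x\<in>UNIV. pmf \<nu> x * (cond1 \<mu> v x * Lam \<theta> F (x(v:=True)) + (1 - cond1 \<mu> v x) * Lam \<theta> F (x(v:=False))))
    \<le> (\<Sum>x\<in>UNIV. pmf \<nu> x * Lam \<theta> (Kv \<theta> \<mu> v F) x)"
proof -
  have th01: "0 \<le> \<theta>" "\<theta> \<le> 1" using th by auto
  show ?thesis
  proof (subst (1 2) sum_pair[of _ v], intro sum_mono)
    fix x assume "x \<in> {x. \<not> x v}"
    then have nx: "\<not> x v" by simp
    define x1 where "x1 = x(v := True)"
    have x0: "x(v := False) = x" using nx by (simp add: fun_upd_idem)
    define a0 where "a0 = pmf \<nu> x"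
    define a1 where "a1 = pmf \<nu> x1"
    define m0 where "m0 = pmf \<mu> x"
    define m1 where "m1 = pmf \<mu> x1"
    define M0 where "M0 = Mv \<theta> F x v Zero"
    define M1 where "M1 = Mv \<theta> F x v One"
    define Ms where "Ms = Mv \<theta> F x v Star"
    define cc where "cc = m1 / (m0 + m1)"
    define tt where "tt = \<theta> * m1 / (\<theta> * m1 + m0)"
    have c: "cond1 \<mu> v x = cc" "cond1 \<mu> v x1 = cc"
      unfolding cc_def
      unfolding cond1_def m0_def m1_def x1_def using x0 by (simp_all add: add.commute)
    have ct: "cond1 (tilt \<theta> \<mu>) v x = tt" "cond1 (tilt \<theta> \<mu>) v x1 = tt"
      unfolding tt_def
      unfolding cond1_tilt[OF th(1)] m0_def m1_def x1_def using x0 by simp_all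
    have Mx1: "Mv \<theta> F x1 v b = Mv \<theta> F x v b" for b unfolding x1_def by simp
    have LamT: "Lam \<theta> F x1 = \<theta> * M1 + (1 - \<theta>) * Ms"
      using Lam_decomp[OF th01, of F x1 v] Mx1 by (simp add: x1_def M1_def Ms_def)
    have Lam0: "Lam \<theta> F x = M0"
      using Lam_decomp[OF th01, of F x v] nx by (simp add: M0_def)
    have x11: "x1(v := True) = x1" "x1(v := False) = x" using x0 by (simp_all add: x1_def)
    have KL0: "Lam \<theta> (Kv \<theta> \<mu> v F) x = tt * M1 + (1 - tt) * M0"
      using Lam_Kv[OF th01, of \<mu> v F x] nx ct(1) by (simp add: M0_def M1_def Let_def)
    have KL1: "Lam \<theta> (Kv \<theta> \<mu> v F) x1 = \<theta> * (tt * M1 + (1 - tt) * M0) + (1 - \<theta>) * Ms"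
      using Lam_Kv[OF th01, of \<mu> v F x1] ct(2) Mx1 by (simp add: M0_def M1_def Ms_def Let_def x1_def)
    have PI: "(a0 + a1) * (cc * (\<theta> * M1 + (1 - \<theta>) * Ms) + (1 - cc) * M0)
      \<le> a0 * (tt * M1 + (1 - tt) * M0)
        + a1 * (\<theta> * (tt * M1 + (1 - tt) * M0) + (1 - \<theta>) * Ms)"
      unfolding cc_def tt_def
    proof (rule pair_ineq[OF th])
      show "0 \<le> a0" "0 \<le> a1" "0 \<le> m0" "0 \<le> m1" by (simp_all add: a0_def a1_def m0_def m1_def)
      have feas: "0 < pmf \<nu> z \<Longrightarrow> 0 < pmf \<mu> (z(v:=True)) + pmf \<mu> (z(v:=False))" for z
        using Dx_feasible[OF A6 RP_supp[OF R]] by (auto simp: feasible_at_def)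
      show "m0 + m1 = 0 \<Longrightarrow> a0 = 0 \<and> a1 = 0"
      proof -
        assume h: "m0 + m1 = 0"
        have "\<not> 0 < a0" using feas[of x] h x0 by (auto simp: a0_def m0_def m1_def x1_def add.commute)
        moreover have "\<not> 0 < a1" using feas[of x1] h x11 by (auto simp: a1_def m0_def m1_def add.commute)
        ultimately show ?thesis using pmf_nonneg[of \<nu> x] pmf_nonneg[of \<nu> x1] by (simp add: a0_def a1_def)
      qed
      show "a0 * m1 \<le> a1 * m0" unfolding a0_def a1_def m0_def m1_def x1_def
        by (rule RP_ratio[OF R]) (auto simp: leB_def)
      have Dx1: "Dx \<mu> x1" if "a0 * m1 < a1 * m0"
      proof -
        have "0 \<le> a0 * m1" by (simp add: a0_def m1_def)
        then have "a1 \<noteq> 0" using that by auto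
        then have "0 < a1" using pmf_nonneg[of \<nu> x1] by (simp add: a1_def)
        then show ?thesis using RP_supp[OF R] by (simp add: a1_def)
      qed
      show "M1 \<le> Ms" if "a0 * m1 < a1 * m0"
        unfolding M1_def Ms_def Mv_def
        by (intro E_mono incrTD[OF F]) (use Dx1[OF that] in \<open>auto simp: leT_def x1_def\<close>)
      show "M0 \<le> M1" if "a0 * m1 < a1 * m0" "0 < m0"
      proof -
        have "Dx \<mu> x" using that(2) by (simp add: Dx_def m0_def)
        then show ?thesis unfolding M1_def M0_def Mv_def
          by (intro E_mono incrTD[OF F]) (use Dx1[OF that(1)] x0 in \<open>auto simp: leT_def x1_def\<close>)
      qed
    qed
    show "pmf \<nu> x * (cond1 \<mu> v x * Lam \<theta> F (x(v := True)) + (1 - cond1 \<mu> v x) * Lam \<theta> F (x(v := False))) +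
         pmf \<nu> (x(v := True)) * (cond1 \<mu> v (x(v := True)) * Lam \<theta> F (x(v := True, v := True)) +
           (1 - cond1 \<mu> v (x(v := True))) * Lam \<theta> F (x(v := True, v := False)))
         \<le> pmf \<nu> x * Lam \<theta> (Kv \<theta> \<mu> v F) x + pmf \<nu> (x(v := True)) * Lam \<theta> (Kv \<theta> \<mu> v F) (x(v := True))"
      unfolding x1_def[symmetric] x11 x0 c ct LamT Lam0 KL0 KL1 a0_def[symmetric] a1_def[symmetric]
    proof -
      have e: "a0 * (cc * (\<theta> * M1 + (1 - \<theta>) * Ms) + (1 - cc) * M0) + a1 * (cc * (\<theta> * M1 + (1 - \<theta>) * Ms) + (1 - cc) * M0)
        = (a0 + a1) * (cc * (\<theta> * M1 + (1 - \<theta>) * Ms) + (1 - cc) * M0)" by (simp add: algebra_simps)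
      show "a0 * (cc * (\<theta> * M1 + (1 - \<theta>) * Ms) + (1 - cc) * M0) + a1 * (cc * (\<theta> * M1 + (1 - \<theta>) * Ms) + (1 - cc) * M0)
        \<le> a0 * (tt * M1 + (1 - tt) * M0) + a1 * (\<theta> * (tt * M1 + (1 - tt) * M0) + (1 - \<theta>) * Ms)"
        unfolding e by (rule PI)
    qed
  qed
qed


lemma swap_div:
  fixes a :: "'a::finite \<Rightarrow> real" and f :: "'b::finite \<Rightarrow> 'a \<Rightarrow> real"
  shows "(\<Sum>x\<in>UNIV. a x * ((\<Sum>v\<in>UNIV. f v x) / n)) = (\<Sum>v\<in>UNIV. \<Sum>x\<in>UNIV. a x * f v x) / n"
proof -
  have "(\<Sum>x\<in>UNIV. a x * ((\<Sum>v\<in>UNIV. f v x) / n)) = (\<Sum>x\<in>UNIV. \<Sum>v\<in>UNIV. a x * f v x) / n"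
    by (simp only: times_divide_eq_right sum_distrib_left sum_divide_distrib)
  also have "\<dots> = (\<Sum>v\<in>UNIV. \<Sum>x\<in>UNIV. a x * f v x) / n"
    by (subst sum.swap) (rule refl)
  finally show ?thesis .
qed

lemma key_all:
  fixes \<mu> \<nu> :: "('v::finite \<Rightarrow> bool) pmf"
  assumes ms: "monotone_system \<mu>" and A6: "\<forall>v. feasible_at \<mu> v (\<lambda>_. True)"
    and th: "0 < \<theta>" "\<theta> < 1" and F: "incrT \<mu> F" and R: "RP \<mu> \<nu>"
  shows "E \<nu> (\<lambda>x. E (glauber_step \<mu> x) (Lam \<theta> F)) \<le> E \<nu> (Lam \<theta> (\<lambda>X. E (alg_step \<theta> \<mu> X) F))"
proof -
  have "E \<nu> (\<lambda>x. E (glauber_step \<mu> x) (Lam \<theta> F)) = (\<Sum>v\<in>UNIV. \<Sum>x\<in>UNIV. pmf \<nu> x *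
      (cond1 \<mu> v x * Lam \<theta> F (x(v:=True)) + (1 - cond1 \<mu> v x) * Lam \<theta> F (x(v:=False)))) / card (UNIV :: 'v set)"
    unfolding E_gstep by (simp only: E_def swap_div)
  also have "\<dots> \<le> (\<Sum>v\<in>UNIV. \<Sum>x\<in>UNIV. pmf \<nu> x * Lam \<theta> (Kv \<theta> \<mu> v F) x) / card (UNIV :: 'v set)"
  proof (rule divide_right_mono)
    show "(\<Sum>v\<in>UNIV. \<Sum>x\<in>UNIV. pmf \<nu> x * (cond1 \<mu> v x * Lam \<theta> F (x(v := True)) + (1 - cond1 \<mu> v x) * Lam \<theta> F (x(v := False))))
      \<le> (\<Sum>v\<in>UNIV. \<Sum>x\<in>UNIV. pmf \<nu> x * Lam \<theta> (Kv \<theta> \<mu> v F) x)"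
      by (rule sum_mono) (rule key_v[OF ms A6 th F R])
  qed simp
  also have "\<dots> = E \<nu> (Lam \<theta> (\<lambda>X. E (alg_step \<theta> \<mu> X) F))"
    unfolding Lam_A by (simp only: E_def swap_div)
  finally show ?thesis .
qed

lemma main_dom:
  fixes \<mu> :: "('v::finite \<Rightarrow> bool) pmf"
  assumes ms: "monotone_system \<mu>" and A6: "\<forall>v. feasible_at \<mu> v (\<lambda>_. True)"
    and th: "0 < \<theta>" "\<theta> < 1"
  shows "\<forall>F. incrT \<mu> F \<longrightarrow> E (glauber \<mu> t) (Lam \<theta> F) \<le> E (alg \<theta> \<mu> T2 t) F"
proof (induction t)
  case 0
  show ?case by (simp add: Lam_lift)
next
  case (Suc t)
  define alg' where "alg' = (if t mod T2 = 0 then alg \<theta> \<mu> T2 t \<bind> (\<lambda>X. lift \<theta> (contr X)) else alg \<theta> \<mu> T2 t)"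
  have C': "E (glauber \<mu> t) (Lam \<theta> H) \<le> E alg' H" if H: "incrT \<mu> H" for H
  proof (cases "t mod T2 = 0")
    case True
    have "Lam \<theta> (\<lambda>X. Lam \<theta> H (contr X)) = Lam \<theta> H" by (rule ext) (rule Lam_contr)
    then have "E (glauber \<mu> t) (Lam \<theta> H) = E (glauber \<mu> t) (Lam \<theta> (\<lambda>X. Lam \<theta> H (contr X)))"
      by simp
    also have "\<dots> \<le> E (alg \<theta> \<mu> T2 t) (\<lambda>X. Lam \<theta> H (contr X))"
      using Suc.IH incrT_L[OF H] by blast
    also have "\<dots> = E alg' H" unfolding alg'_def if_P[OF True] E_bind Lam_lift by (rule refl)
    finally show ?thesis .
  next
    case False
    then have "alg' = alg \<theta> \<mu> T2 t" unfolding alg'_def by simp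
    then show ?thesis using Suc.IH H by auto
  qed
  show ?case
  proof (intro allI impI)
    fix F assume F: "incrT \<mu> F"
    have "E (glauber \<mu> (Suc t)) (Lam \<theta> F) = E (glauber \<mu> t) (\<lambda>x. E (glauber_step \<mu> x) (Lam \<theta> F))"
      by (simp only: glauber.simps E_bind)
    also have "\<dots> \<le> E (glauber \<mu> t) (Lam \<theta> (\<lambda>X. E (alg_step \<theta> \<mu> X) F))"
      by (rule key_all[OF ms A6 th F RP_glauber[OF ms A6]])
    also have "\<dots> \<le> E alg' (\<lambda>X. E (alg_step \<theta> \<mu> X) F)"
      by (rule C'[OF incrT_A[OF ms A6 th(1) F]])
    also have "\<dots> = E (alg \<theta> \<mu> T2 (Suc t)) F"
      unfolding alg.simps(2) E_bind alg'_def by (rule refl)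
    finally show "E (glauber \<mu> (Suc t)) (Lam \<theta> F) \<le> E (alg \<theta> \<mu> T2 (Suc t)) F" .
  qed
qed


lemma tv_upper:
  fixes \<nu> \<mu> :: "'a::finite pmf" and U :: "'a set"
  assumes pos: "\<And>x. x \<in> U \<Longrightarrow> pmf \<mu> x \<le> pmf \<nu> x"
    and neg: "\<And>x. x \<notin> U \<Longrightarrow> pmf \<nu> x \<le> pmf \<mu> x"
  shows "\<bar>measure_pmf.prob \<nu> A - measure_pmf.prob \<mu> A\<bar> \<le> measure_pmf.prob \<nu> U - measure_pmf.prob \<mu> U"
proof -
  have diff: "measure_pmf.prob \<nu> B - measure_pmf.prob \<mu> B = (\<Sum>x\<in>UNIV. indicator B x * (pmf \<nu> x - pmf \<mu> x))" for B
    by (simp add: prob_E E_def algebra_simps sum_subtractf)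
  have le: "(\<Sum>x\<in>UNIV. indicator B x * (pmf \<nu> x - pmf \<mu> x)) \<le> (\<Sum>x\<in>UNIV. indicator U x * (pmf \<nu> x - pmf \<mu> x))" for B
  proof (rule sum_mono)
    fix x :: 'a
    show "indicator B x * (pmf \<nu> x - pmf \<mu> x) \<le> indicator U x * (pmf \<nu> x - pmf \<mu> x)"
      using pos[of x] neg[of x] by (cases "x \<in> U"; cases "x \<in> B") auto
  qed
  have tot: "measure_pmf.prob \<nu> (- A) = 1 - measure_pmf.prob \<nu> A" "measure_pmf.prob \<mu> (- A) = 1 - measure_pmf.prob \<mu> A"
    by (simp_all add: measure_pmf.prob_compl[symmetric] Compl_eq_Diff_UNIV)
  have 1: "measure_pmf.prob \<nu> A - measure_pmf.prob \<mu> A \<le> measure_pmf.prob \<nu> U - measure_pmf.prob \<mu> U"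
    using le[of A] diff[of A] diff[of U] by simp
  have 2: "measure_pmf.prob \<mu> A - measure_pmf.prob \<nu> A \<le> measure_pmf.prob \<nu> U - measure_pmf.prob \<mu> U"
    using le[of "- A"] diff[of "- A"] diff[of U] tot by simp
  show ?thesis using 1 2 by linarith
qed

lemma tv_lower:
  fixes p q :: "'a::finite pmf"
  shows "measure_pmf.prob p U - measure_pmf.prob q U \<le> tv_dist p q"
proof -
  have bdd: "bdd_above (range (\<lambda>A. \<bar>measure_pmf.prob p A - measure_pmf.prob q A\<bar>))"
    by (rule bdd_above_finite) simp
  have "\<bar>measure_pmf.prob p U - measure_pmf.prob q U\<bar> \<le> tv_dist p q"
    unfolding tv_dist_def by (rule cSUP_upper[OF UNIV_I bdd])
  then show ?thesis by linarith
qed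

theorem lemma3p2:
  fixes \<mu> :: "('v::finite \<Rightarrow> bool) pmf" and \<theta> :: real and T1 T2 t :: nat
  assumes "monotone_system \<mu>"
    and "0 < \<theta>" and "\<theta> < 1" and "1 \<le> T1" and "1 \<le> T2"
    and "\<forall>v. feasible_at \<mu> v (\<lambda>_. True)"
    and "t \<le> T1 * T2"
  shows "tv_dist (glauber \<mu> t) \<mu> \<le> tv_dist (map_pmf contr (alg \<theta> \<mu> T2 t)) \<mu>"
proof -
  note ms = assms(1) and A6 = assms(6) and th = assms(2,3)
  define \<nu> where "\<nu> = glauber \<mu> t"
  have R: "RP \<mu> \<nu>" unfolding \<nu>_def by (rule RP_glauber[OF ms A6])
  define U where "U = {x. pmf \<mu> x < pmf \<nu> x \<or> pmf \<mu> x = 0}"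
  have tv1: "tv_dist \<nu> \<mu> \<le> measure_pmf.prob \<nu> U - measure_pmf.prob \<mu> U"
    unfolding tv_dist_def
  proof (rule cSUP_least)
    fix A
    show "\<bar>measure_pmf.prob \<nu> A - measure_pmf.prob \<mu> A\<bar> \<le> measure_pmf.prob \<nu> U - measure_pmf.prob \<mu> U"
    proof (rule tv_upper)
      fix x assume "x \<in> U" then show "pmf \<mu> x \<le> pmf \<nu> x"
        unfolding U_def using pmf_nonneg[of \<nu> x] by auto
    next
      fix x assume "x \<notin> U" then show "pmf \<nu> x \<le> pmf \<mu> x"
        unfolding U_def by auto
    qed
  qed simp
  define F where "F = (\<lambda>X::'v \<Rightarrow> tri. indicator U (contr X) :: real)"
  have incF: "incrT \<mu> F"
    unfolding incrT_def
  proof (intro allI impI)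
    fix X Y :: "'v \<Rightarrow> tri"
    assume le: "leT X Y" and dX: "Dx \<mu> (contr X)" and dY: "Dx \<mu> (contr Y)"
    define x where "x = contr X"
    define y where "y = contr Y"
    have lxy: "leB x y" using leT_contr[OF le] by (simp add: x_def y_def)
    have "y \<in> U" if xU: "x \<in> U"
    proof (cases "pmf \<mu> y = 0")
      case True then show ?thesis by (simp add: U_def)
    next
      case False
      then have py: "0 < pmf \<mu> y" by (simp add: less_le)
      show ?thesis
      proof (cases "pmf \<mu> x = 0")
        case True
        then have "x = (\<lambda>_. True)" using dX by (simp add: Dx_def x_def)
        then have "y = x" using leB_top lxy by simp
        then show ?thesis using xU by simp
      next
        case False
        then have px: "0 < pmf \<mu> x" by (simp add: less_le)
        then have lt: "pmf \<mu> x < pmf \<nu> x" using xU False by (simp add: U_def)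
        have "pmf \<mu> x * pmf \<mu> y < pmf \<nu> x * pmf \<mu> y" using lt py by simp
        also have "\<dots> \<le> pmf \<nu> y * pmf \<mu> x" by (rule RP_ratio[OF R lxy])
        finally have "pmf \<mu> y * pmf \<mu> x < pmf \<nu> y * pmf \<mu> x" by (simp add: mult.commute)
        then have "pmf \<mu> y < pmf \<nu> y" using px by simp
        then show ?thesis by (simp add: U_def)
      qed
    qed
    then show "F X \<le> F Y" by (simp add: F_def x_def[symmetric] y_def[symmetric] indicator_def)
  qed
  have dom: "measure_pmf.prob \<nu> U \<le> measure_pmf.prob (map_pmf contr (alg \<theta> \<mu> T2 t)) U"
  proof -
    have "Lam \<theta> F = indicator U" unfolding F_def by (rule ext) (rule Lam_contr)
    then have "measure_pmf.prob \<nu> U = E \<nu> (Lam \<theta> F)" by (simp add: prob_E)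
    also have "\<dots> \<le> E (alg \<theta> \<mu> T2 t) F" unfolding \<nu>_def using main_dom[OF ms A6 th] incF by blast
    also have "\<dots> = measure_pmf.prob (map_pmf contr (alg \<theta> \<mu> T2 t)) U"
      by (simp add: prob_E E_map F_def)
    finally show ?thesis .
  qed
  have "tv_dist \<nu> \<mu> \<le> measure_pmf.prob (map_pmf contr (alg \<theta> \<mu> T2 t)) U - measure_pmf.prob \<mu> U"
    using tv1 dom by linarith
  also have "\<dots> \<le> tv_dist (map_pmf contr (alg \<theta> \<mu> T2 t)) \<mu>" by (rule tv_lower)
  finally show ?thesis unfolding \<nu>_def .
qed

end
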